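(* Let $\bar\alpha$ be an affine infra-nilmanifold endomorphism of $\Gamma\backslash G$ induced by $\alpha\in\mathrm{Aff}(G)$, let $N=\Gamma\cap G$ be the Fitting subgroup of $\Gamma$, and let $p:N\backslash G\to\Gamma\backslash G$, $Nx\mapsto\Gamma x$, be the natural covering map. Then $\alpha N\alpha^{-1}\subseteq N$, so $\alpha$ induces an affine nilmanifold endomorphism $\tilde\alpha(Nx)=N\,{}^{\alpha}x$ of $N\backslash G$, which is a lift of $\bar\alpha$ (i.e. $p\circ\tilde\alpha=\bar\alpha\circ p$), and $$p^{-1}(\mathrm{ePer}(\bar\alpha))=\mathrm{ePer}(\tilde\alpha),\qquad p^{-1}(\mathrm{Per}(\bar\alpha))=\mathrm{Per}(\tilde\alpha).$$
   Context: $G$ is a connected, simply connected nilpotent Lie group, $\mathrm{Aff}(G)=G\rtimes\mathrm{Aut}(G)$ acting by ${}^{(g,\delta)}x=g\delta(x)$, with $G$ identified with pure translations. $\Gamma\le G\rtimes F$ ($F\le \mathrm{Aut}(G)$ finite) is a torsion-free discrete subgroup with $\Gamma\backslash G$ compact, and $\bar\alpha(\Gamma x)=\Gamma\,{}^\alpha x$ where $\alpha\Gamma\alpha^{-1}\subseteq\Gamma$. For a self-map $f$: $\mathrm{Per}(f)=\{x:\exists k>0, f^k(x)=x\}$, $\mathrm{ePer}(f)=\{x:\exists k>0, f^k(x)\in\mathrm{Per}(f)\}$. *)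

theory Defs
  imports "HOL-Analysis.Analysis" "HOL-Algebra.Algebra"
begin

primrec lower_central :: "('a, 'b) monoid_scheme \<Rightarrow> nat \<Rightarrow> 'a set" where
  "lower_central G 0 = carrier G"
| "lower_central G (Suc n) =
     generate G {a \<otimes>\<^bsub>G\<^esub> b \<otimes>\<^bsub>G\<^esub> inv\<^bsub>G\<^esub> a \<otimes>\<^bsub>G\<^esub> inv\<^bsub>G\<^esub> b
                 | a b. a \<in> carrier G \<and> b \<in> lower_central G n}"

definition nilpotent_group :: "('a, 'b) monoid_scheme \<Rightarrow> bool" where
  "nilpotent_group G \<longleftrightarrow> group G \<and> (\<exists>n. lower_central G n = {\<one>\<^bsub>G\<^esub>})"

text \<open>G is a group whose carrier is the whole Euclidean space 'a, with continuous
operations; Aut(G) are the group automorphisms that are homeomorphisms.\<close>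

definition cont_aut :: "('a::topological_space) monoid \<Rightarrow> ('a \<Rightarrow> 'a) set" where
  "cont_aut G = {\<delta>. \<delta> \<in> iso G G \<and> (\<exists>\<delta>'. homeomorphism UNIV UNIV \<delta> \<delta>')}"

definition Aff :: "('a::topological_space) monoid \<Rightarrow> ('a \<times> ('a \<Rightarrow> 'a)) monoid" where
  "Aff G = \<lparr> carrier = carrier G \<times> cont_aut G,
             mult = (\<lambda>(g, \<delta>) (h, \<epsilon>). (g \<otimes>\<^bsub>G\<^esub> \<delta> h, \<delta> \<circ> \<epsilon>)),
             one = (\<one>\<^bsub>G\<^esub>, id) \<rparr>"

definition aff_act :: "'a monoid \<Rightarrow> 'a \<times> ('a \<Rightarrow> 'a) \<Rightarrow> 'a \<Rightarrow> 'a" where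
  "aff_act G \<gamma> x = fst \<gamma> \<otimes>\<^bsub>G\<^esub> snd \<gamma> x"

text \<open>G identified with pure translations; N = Gamma \<inter> G.\<close>

definition transl_part :: "('a \<times> ('a \<Rightarrow> 'a)) set \<Rightarrow> ('a \<times> ('a \<Rightarrow> 'a)) set" where
  "transl_part \<Gamma> = {\<gamma> \<in> \<Gamma>. snd \<gamma> = id}"

text \<open>The point H x of the orbit space H\G, represented as the orbit (a set).\<close>

definition orbit :: "'a monoid \<Rightarrow> ('a \<times> ('a \<Rightarrow> 'a)) set \<Rightarrow> 'a \<Rightarrow> 'a set" where
  "orbit G H x = (\<lambda>h. aff_act G h x) ` H"

definition orbit_space :: "'a monoid \<Rightarrow> ('a \<times> ('a \<Rightarrow> 'a)) set \<Rightarrow> 'a set set" where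
  "orbit_space G H = range (orbit G H)"

text \<open>Map on H\G induced by alpha: it sends H x to H (alpha x) (choice free
formulation: image of the orbit under alpha, saturated by H).\<close>

definition induced_map ::
  "'a monoid \<Rightarrow> ('a \<times> ('a \<Rightarrow> 'a)) set \<Rightarrow> 'a \<times> ('a \<Rightarrow> 'a) \<Rightarrow> 'a set \<Rightarrow> 'a set" where
  "induced_map G H \<alpha> S = {aff_act G h (aff_act G \<alpha> y) | h y. h \<in> H \<and> y \<in> S}"

definition proj_map ::
  "'a monoid \<Rightarrow> ('a \<times> ('a \<Rightarrow> 'a)) set \<Rightarrow> 'a set \<Rightarrow> 'a set" where
  "proj_map G \<Gamma> S = {aff_act G \<gamma> y | \<gamma> y. \<gamma> \<in> \<Gamma> \<and> y \<in> S}"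

definition Per_on :: "'b set \<Rightarrow> ('b \<Rightarrow> 'b) \<Rightarrow> 'b set" where
  "Per_on A f = {x \<in> A. \<exists>k>0. (f ^^ k) x = x}"

definition ePer_on :: "'b set \<Rightarrow> ('b \<Rightarrow> 'b) \<Rightarrow> 'b set" where
  "ePer_on A f = {x \<in> A. \<exists>k>0. (f ^^ k) x \<in> Per_on A f}"

end

theory Submission imports Defs begin

lemma cont_aut_hom:
  assumes "\<delta> \<in> cont_aut G" "x \<in> carrier G" "y \<in> carrier G"
  shows "\<delta> (x \<otimes>\<^bsub>G\<^esub> y) = \<delta> x \<otimes>\<^bsub>G\<^esub> \<delta> y"
  using assms by (auto simp: cont_aut_def iso_def hom_def)

lemma cont_aut_comp:
  assumes "\<delta> \<in> cont_aut G" "\<epsilon> \<in> cont_aut G"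
  shows "\<delta> \<circ> \<epsilon> \<in> cont_aut G"
proof -
  obtain d' where d: "homeomorphism UNIV UNIV \<delta> d'" using assms by (auto simp: cont_aut_def)
  obtain e' where e: "homeomorphism UNIV UNIV \<epsilon> e'" using assms by (auto simp: cont_aut_def)
  have "homeomorphism UNIV UNIV (\<delta> \<circ> \<epsilon>) (e' \<circ> d')"
    using homeomorphism_compose[OF e d] .
  moreover have "\<delta> \<circ> \<epsilon> \<in> iso G G" using assms iso_set_trans[of \<epsilon> G G \<delta> G]
    by (auto simp: cont_aut_def)
  ultimately show ?thesis by (auto simp: cont_aut_def)
qed

lemma cont_aut_inv:
  assumes "group G" "carrier G = UNIV" "\<delta> \<in> cont_aut G"
  shows "\<exists>\<epsilon>\<in>cont_aut G. \<epsilon> \<circ> \<delta> = id \<and> \<delta> \<circ> \<epsilon> = id"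
proof -
  obtain d' where d: "homeomorphism UNIV UNIV \<delta> d'" using assms by (auto simp: cont_aut_def)
  have iso: "\<delta> \<in> iso G G" using assms by (auto simp: cont_aut_def)
  have ii: "inv_into (carrier G) \<delta> \<in> iso G G" using group.iso_set_sym[OF assms(1) iso] .
  have inj: "inj \<delta>" using d by (metis homeomorphism_apply1 UNIV_I injI)
  have eq: "d' x = inv_into (carrier G) \<delta> x" for x
    using d inj assms(2) by (metis UNIV_I homeomorphism_apply2 inv_into_f_eq)
  have "d' \<in> iso G G" using group.iso_eq[OF assms(1) ii] eq by blast
  moreover have "homeomorphism UNIV UNIV d' \<delta>" using d homeomorphism_sym by blast
  ultimately have "d' \<in> cont_aut G" by (auto simp: cont_aut_def)
  moreover have "d' \<circ> \<delta> = id" "\<delta> \<circ> d' = id" using d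
    by (auto simp: fun_eq_iff homeomorphism_def)
  ultimately show ?thesis by blast
qed

lemma Aff_group:
  assumes G: "group G" and C: "carrier G = UNIV"
  shows "group (Aff G)"
proof (rule groupI)
  interpret group G by fact
  show "x \<otimes>\<^bsub>Aff G\<^esub> y \<in> carrier (Aff G)" if "x \<in> carrier (Aff G)" "y \<in> carrier (Aff G)" for x y
    using that C cont_aut_comp by (auto simp: Aff_def split: prod.splits)
  show "\<one>\<^bsub>Aff G\<^esub> \<in> carrier (Aff G)"
  proof -
    have "id \<in> iso G G" by (simp add: iso_def hom_def bij_betw_def)
    moreover have "homeomorphism UNIV UNIV id id" by (simp add: homeomorphism_def)
    ultimately show ?thesis by (auto simp: Aff_def cont_aut_def C)
  qed
  show "x \<otimes>\<^bsub>Aff G\<^esub> y \<otimes>\<^bsub>Aff G\<^esub> z = x \<otimes>\<^bsub>Aff G\<^esub> (y \<otimes>\<^bsub>Aff G\<^esub> z)"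
    if "x \<in> carrier (Aff G)" "y \<in> carrier (Aff G)" "z \<in> carrier (Aff G)" for x y z
    using that C by (auto simp: Aff_def cont_aut_hom m_assoc split: prod.splits)
  show "\<one>\<^bsub>Aff G\<^esub> \<otimes>\<^bsub>Aff G\<^esub> x = x" if "x \<in> carrier (Aff G)" for x
    using that C by (auto simp: Aff_def split: prod.splits)
  show "\<exists>y\<in>carrier (Aff G). y \<otimes>\<^bsub>Aff G\<^esub> x = \<one>\<^bsub>Aff G\<^esub>" if "x \<in> carrier (Aff G)" for x
  proof -
    have x2: "snd x \<in> cont_aut G" using that by (auto simp: Aff_def mem_Times_iff)
    obtain g \<delta> where x: "x = (g, \<delta>)" "\<delta> \<in> cont_aut G" using x2 prod.collapse by metis
    obtain \<epsilon> where e: "\<epsilon> \<in> cont_aut G" "\<epsilon> \<circ> \<delta> = id" using cont_aut_inv[OF G C x(2)] by blast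
    have "(inv\<^bsub>G\<^esub> (\<epsilon> g), \<epsilon>) \<otimes>\<^bsub>Aff G\<^esub> x = \<one>\<^bsub>Aff G\<^esub>"
      using x e C by (simp add: Aff_def)
    moreover have "(inv\<^bsub>G\<^esub> (\<epsilon> g), \<epsilon>) \<in> carrier (Aff G)" using e C by (simp add: Aff_def)
    ultimately show ?thesis by blast
  qed
qed

lemma snd_mult: "snd (p \<otimes>\<^bsub>Aff G\<^esub> q) = snd p \<circ> snd q"
  by (cases p; cases q) (simp add: Aff_def)

lemma snd_one: "snd (\<one>\<^bsub>Aff G\<^esub>) = id"
  by (simp add: Aff_def)

lemma act_one:
  assumes "group G" "carrier G = UNIV" shows "aff_act G \<one>\<^bsub>Aff G\<^esub> y = y"
  using assms by (simp add: Aff_def aff_act_def group.is_monoid monoid.l_one)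

lemma act_mult:
  assumes G: "group G" and C: "carrier G = UNIV"
    and p: "p \<in> carrier (Aff G)" and q: "q \<in> carrier (Aff G)"
  shows "aff_act G (p \<otimes>\<^bsub>Aff G\<^esub> q) y = aff_act G p (aff_act G q y)"
proof -
  interpret group G by fact
  obtain g \<delta> h \<epsilon> where pq: "p = (g, \<delta>)" "q = (h, \<epsilon>)" by (cases p; cases q) auto
  have d: "\<delta> \<in> cont_aut G" using p pq by (simp add: Aff_def)
  show ?thesis using pq d C by (simp add: Aff_def aff_act_def cont_aut_hom m_assoc)
qed

lemma orbit_mem:
  assumes "group G" "carrier G = UNIV" "\<one>\<^bsub>Aff G\<^esub> \<in> H" shows "y \<in> orbit G H y"
  using assms act_one[OF assms(1,2)] unfolding orbit_def by (metis image_eqI)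

lemma induced_orbit:
  assumes G: "group G" and C: "carrier G = UNIV"
    and H: "H \<subseteq> carrier (Aff G)" "\<one>\<^bsub>Aff G\<^esub> \<in> H"
    and Hm: "\<And>h h'. h \<in> H \<Longrightarrow> h' \<in> H \<Longrightarrow> h \<otimes>\<^bsub>Aff G\<^esub> h' \<in> H"
    and a: "\<alpha> \<in> carrier (Aff G)"
    and conj: "\<forall>h\<in>H. \<alpha> \<otimes>\<^bsub>Aff G\<^esub> h \<otimes>\<^bsub>Aff G\<^esub> inv\<^bsub>Aff G\<^esub> \<alpha> \<in> H"
  shows "induced_map G H \<alpha> (orbit G H x) = orbit G H (aff_act G \<alpha> x)"
proof
  interpret A: group "Aff G" using Aff_group[OF G C] .
  show "induced_map G H \<alpha> (orbit G H x) \<subseteq> orbit G H (aff_act G \<alpha> x)"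
  proof
    fix z assume "z \<in> induced_map G H \<alpha> (orbit G H x)"
    then obtain h \<gamma> where z: "z = aff_act G h (aff_act G \<alpha> (aff_act G \<gamma> x))" "h \<in> H" "\<gamma> \<in> H"
      by (auto simp: induced_map_def orbit_def)
    define c where "c = \<alpha> \<otimes>\<^bsub>Aff G\<^esub> \<gamma> \<otimes>\<^bsub>Aff G\<^esub> inv\<^bsub>Aff G\<^esub> \<alpha>"
    have cH: "c \<in> H" using conj z by (simp add: c_def)
    have hc: "h \<in> carrier (Aff G)" "c \<in> carrier (Aff G)" "\<gamma> \<in> carrier (Aff G)" using H cH z by auto
    have "c \<otimes>\<^bsub>Aff G\<^esub> \<alpha> = \<alpha> \<otimes>\<^bsub>Aff G\<^esub> \<gamma>"
      using hc a by (simp add: c_def A.m_assoc)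
    then have "aff_act G c (aff_act G \<alpha> x) = aff_act G \<alpha> (aff_act G \<gamma> x)"
      using act_mult[OF G C] hc a by metis
    then have "z = aff_act G (h \<otimes>\<^bsub>Aff G\<^esub> c) (aff_act G \<alpha> x)"
      using z act_mult[OF G C] hc by metis
    moreover have "h \<otimes>\<^bsub>Aff G\<^esub> c \<in> H" using Hm cH z by blast
    ultimately show "z \<in> orbit G H (aff_act G \<alpha> x)" by (auto simp: orbit_def)
  qed
  show "orbit G H (aff_act G \<alpha> x) \<subseteq> induced_map G H \<alpha> (orbit G H x)"
    using orbit_mem[OF G C H(2), of x] by (auto simp: induced_map_def orbit_def)
qed

lemma orbit_shift:
  assumes G: "group G" and C: "carrier G = UNIV"
    and H: "H \<subseteq> carrier (Aff G)"
    and Hm: "\<And>h h'. h \<in> H \<Longrightarrow> h' \<in> H \<Longrightarrow> h \<otimes>\<^bsub>Aff G\<^esub> h' \<in> H"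
    and Hi: "\<And>h. h \<in> H \<Longrightarrow> inv\<^bsub>Aff G\<^esub> h \<in> H"
    and h: "h \<in> H"
  shows "orbit G H (aff_act G h v) = orbit G H v"
proof
  interpret A: group "Aff G" using Aff_group[OF G C] .
  show "orbit G H (aff_act G h v) \<subseteq> orbit G H v"
    using act_mult[OF G C] H Hm h unfolding orbit_def
    by (smt (verit, ccfv_SIG) image_iff subset_iff)
  show "orbit G H v \<subseteq> orbit G H (aff_act G h v)"
  proof
    fix z assume "z \<in> orbit G H v"
    then obtain h' where z: "z = aff_act G h' v" "h' \<in> H" by (auto simp: orbit_def)
    have c: "h \<in> carrier (Aff G)" "h' \<in> carrier (Aff G)" using H h z by auto
    have "h' = (h' \<otimes>\<^bsub>Aff G\<^esub> inv\<^bsub>Aff G\<^esub> h) \<otimes>\<^bsub>Aff G\<^esub> h" using c by (simp add: A.m_assoc)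
    then have "z = aff_act G (h' \<otimes>\<^bsub>Aff G\<^esub> inv\<^bsub>Aff G\<^esub> h) (aff_act G h v)"
      using z act_mult[OF G C] c by (metis A.inv_closed A.m_closed)
    moreover have "h' \<otimes>\<^bsub>Aff G\<^esub> inv\<^bsub>Aff G\<^esub> h \<in> H" using Hm Hi h z by blast
    ultimately show "z \<in> orbit G H (aff_act G h v)" by (auto simp: orbit_def)
  qed
qed

lemma inj_periodic:
  assumes fin: "finite H" and mapsH: "L ` H \<subseteq> H" and inj: "inj_on L H" and a: "a \<in> H"
  shows "\<exists>m>0. (L ^^ m) a = a"
proof -
  have maps: "(L ^^ j) a \<in> H" for j
    by (induction j) (use a mapsH in auto)
  have injj: "\<forall>u\<in>H. \<forall>v\<in>H. (L ^^ i) u = (L ^^ i) v \<longrightarrow> u = v" for i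
  proof (induction i)
    case 0 then show ?case by simp
  next
    case (Suc i)
    show ?case
    proof (intro ballI impI)
      fix u v assume uv: "u \<in> H" "v \<in> H" "(L ^^ Suc i) u = (L ^^ Suc i) v"
      then have "(L ^^ i) (L u) = (L ^^ i) (L v)" by (simp add: funpow_Suc_right del: funpow.simps)
      then have "L u = L v" using Suc uv mapsH by blast
      then show "u = v" using inj uv by (meson inj_onD)
    qed
  qed
  have "\<not> inj_on (\<lambda>j. (L ^^ j) a) {..card H}"
  proof
    assume "inj_on (\<lambda>j. (L ^^ j) a) {..card H}"
    then have "card {..card H} \<le> card H" using card_inj_on_le[of _ "{..card H}" H] maps fin by blast
    then show False by simp
  qed
  then obtain i j where ij: "i \<noteq> j" "(L ^^ i) a = (L ^^ j) a" unfolding inj_on_def by blast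
  obtain i j where ij: "i < j" "(L ^^ i) a = (L ^^ j) a"
    using ij by (metis linorder_neqE_nat)
  have "(L ^^ j) a = (L ^^ i) ((L ^^ (j - i)) a)"
    using ij(1) by (metis add_diff_inverse_nat funpow_add less_imp_not_less o_apply)
  then have "(L ^^ (j - i)) a = a" using injj[of i] ij maps a by metis
  then show ?thesis using ij(1) by (intro exI[of _ "j - i"]) auto
qed

lemma per_char:
  assumes "\<forall>x j. (f ^^ j) (Orb x) = Orb ((A ^^ j) x)"
  shows "Orb x \<in> Per_on (range Orb) f \<longleftrightarrow> (\<exists>j>0. Orb ((A ^^ j) x) = Orb x)"
  using assms by (auto simp: Per_on_def)

lemma eper_char:
  assumes "\<forall>x j. (f ^^ j) (Orb x) = Orb ((A ^^ j) x)"
  shows "Orb x \<in> ePer_on (range Orb) f \<longleftrightarrow> (\<exists>k>0. \<exists>j>0. Orb ((A ^^ j) ((A ^^ k) x)) = Orb ((A ^^ k) x))"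
  using assms per_char[OF assms] by (auto simp: ePer_on_def)

lemma set_eq_helper:
  "YY \<subseteq> range Orb \<Longrightarrow> (\<And>x. qq (Orb x) \<in> XX \<longleftrightarrow> Orb x \<in> YY) \<Longrightarrow> {S \<in> range Orb. qq S \<in> XX} = YY"
  by blast

theorem mainTheorem8:
  fixes G :: "('a::euclidean_space) monoid"
    and \<Gamma> :: "('a \<times> ('a \<Rightarrow> 'a)) set"
    and F :: "('a \<Rightarrow> 'a) set"
    and \<alpha> :: "'a \<times> ('a \<Rightarrow> 'a)"
  assumes G_group: "group G"
    and G_carrier: "carrier G = UNIV"
    and G_mult_cont: "continuous_on UNIV (\<lambda>(x, y). x \<otimes>\<^bsub>G\<^esub> y)"
    and G_inv_cont: "continuous_on UNIV (\<lambda>x. inv\<^bsub>G\<^esub> x)"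
    and G_nilpotent: "nilpotent_group G"
    and F_fin: "finite F"
    and F_aut: "F \<subseteq> cont_aut G"
    and \<Gamma>_sub: "subgroup \<Gamma> (Aff G)"
    and \<Gamma>_in: "\<Gamma> \<subseteq> UNIV \<times> F"
    and \<Gamma>_discrete: "\<forall>\<delta>\<in>F. discrete {g. (g, \<delta>) \<in> \<Gamma>}"
    and \<Gamma>_torsion_free: "\<forall>\<gamma>\<in>\<Gamma>. \<forall>n::nat. n > 0 \<longrightarrow> \<gamma> [^]\<^bsub>Aff G\<^esub> n = \<one>\<^bsub>Aff G\<^esub> \<longrightarrow> \<gamma> = \<one>\<^bsub>Aff G\<^esub>"
    and \<Gamma>_cocompact: "\<exists>K. compact K \<and> (\<forall>x. \<exists>\<gamma>\<in>\<Gamma>. \<exists>k\<in>K. x = aff_act G \<gamma> k)"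
    and \<alpha>_aff: "\<alpha> \<in> carrier (Aff G)"
    and \<alpha>_conj: "\<forall>\<gamma>\<in>\<Gamma>. \<alpha> \<otimes>\<^bsub>Aff G\<^esub> \<gamma> \<otimes>\<^bsub>Aff G\<^esub> inv\<^bsub>Aff G\<^esub> \<alpha> \<in> \<Gamma>"
  shows "(\<forall>n\<in>transl_part \<Gamma>. \<alpha> \<otimes>\<^bsub>Aff G\<^esub> n \<otimes>\<^bsub>Aff G\<^esub> inv\<^bsub>Aff G\<^esub> \<alpha> \<in> transl_part \<Gamma>)
       \<and> (\<forall>x. induced_map G \<Gamma> \<alpha> (orbit G \<Gamma> x) = orbit G \<Gamma> (aff_act G \<alpha> x))
       \<and> (\<forall>x. induced_map G (transl_part \<Gamma>) \<alpha> (orbit G (transl_part \<Gamma>) x)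
              = orbit G (transl_part \<Gamma>) (aff_act G \<alpha> x))
       \<and> (\<forall>x. proj_map G \<Gamma> (orbit G (transl_part \<Gamma>) x) = orbit G \<Gamma> x)
       \<and> (\<forall>S\<in>orbit_space G (transl_part \<Gamma>).
              proj_map G \<Gamma> (induced_map G (transl_part \<Gamma>) \<alpha> S)
              = induced_map G \<Gamma> \<alpha> (proj_map G \<Gamma> S))
       \<and> {S \<in> orbit_space G (transl_part \<Gamma>).
            proj_map G \<Gamma> S \<in> ePer_on (orbit_space G \<Gamma>) (induced_map G \<Gamma> \<alpha>)}
         = ePer_on (orbit_space G (transl_part \<Gamma>)) (induced_map G (transl_part \<Gamma>) \<alpha>)
       \<and> {S \<in> orbit_space G (transl_part \<Gamma>).
            proj_map G \<Gamma> S \<in> Per_on (orbit_space G \<Gamma>) (induced_map G \<Gamma> \<alpha>)}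
         = Per_on (orbit_space G (transl_part \<Gamma>)) (induced_map G (transl_part \<Gamma>) \<alpha>)"
proof -
  interpret A: group "Aff G" using Aff_group[OF G_group G_carrier] .
  note G = G_group and C = G_carrier
  define N where "N = transl_part \<Gamma>"
  have \<Gamma>C: "\<Gamma> \<subseteq> carrier (Aff G)" using subgroup.subset[OF \<Gamma>_sub] .
  have \<Gamma>1: "\<one>\<^bsub>Aff G\<^esub> \<in> \<Gamma>" using subgroup.one_closed[OF \<Gamma>_sub] .
  have \<Gamma>m: "\<And>h h'. h \<in> \<Gamma> \<Longrightarrow> h' \<in> \<Gamma> \<Longrightarrow> h \<otimes>\<^bsub>Aff G\<^esub> h' \<in> \<Gamma>"
    using subgroup.m_closed[OF \<Gamma>_sub] .
  have \<Gamma>i: "\<And>h. h \<in> \<Gamma> \<Longrightarrow> inv\<^bsub>Aff G\<^esub> h \<in> \<Gamma>"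
    using subgroup.m_inv_closed[OF \<Gamma>_sub] .
  have NG: "N \<subseteq> \<Gamma>" by (auto simp: N_def transl_part_def)
  have NC: "N \<subseteq> carrier (Aff G)" using NG \<Gamma>C by blast
  have N1: "\<one>\<^bsub>Aff G\<^esub> \<in> N" using \<Gamma>1 by (simp add: N_def transl_part_def snd_one)
  have Nm: "\<And>h h'. h \<in> N \<Longrightarrow> h' \<in> N \<Longrightarrow> h \<otimes>\<^bsub>Aff G\<^esub> h' \<in> N"
    using \<Gamma>m by (auto simp: N_def transl_part_def snd_mult)
  have Ni: "inv\<^bsub>Aff G\<^esub> h \<in> N" if h: "h \<in> N" for h
  proof -
    have hc: "h \<in> carrier (Aff G)" using h NC by blast
    have "snd (inv\<^bsub>Aff G\<^esub> h \<otimes>\<^bsub>Aff G\<^esub> h) = id" using hc by (simp add: snd_one)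
    then have "snd (inv\<^bsub>Aff G\<^esub> h) = id" using h by (simp add: snd_mult N_def transl_part_def)
    then show ?thesis using \<Gamma>i h NG by (auto simp: N_def transl_part_def)
  qed
  have P1: "\<forall>n\<in>N. \<alpha> \<otimes>\<^bsub>Aff G\<^esub> n \<otimes>\<^bsub>Aff G\<^esub> inv\<^bsub>Aff G\<^esub> \<alpha> \<in> N"
  proof
    fix n assume n: "n \<in> N"
    have "snd (\<alpha> \<otimes>\<^bsub>Aff G\<^esub> inv\<^bsub>Aff G\<^esub> \<alpha>) = id" using \<alpha>_aff by (simp add: snd_one)
    then have "snd (\<alpha> \<otimes>\<^bsub>Aff G\<^esub> n \<otimes>\<^bsub>Aff G\<^esub> inv\<^bsub>Aff G\<^esub> \<alpha>) = id"
      using n by (simp add: snd_mult N_def transl_part_def)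
    then show "\<alpha> \<otimes>\<^bsub>Aff G\<^esub> n \<otimes>\<^bsub>Aff G\<^esub> inv\<^bsub>Aff G\<^esub> \<alpha> \<in> N"
      using \<alpha>_conj n NG by (auto simp: N_def transl_part_def)
  qed
  have P2: "\<forall>x. induced_map G \<Gamma> \<alpha> (orbit G \<Gamma> x) = orbit G \<Gamma> (aff_act G \<alpha> x)"
    using induced_orbit[OF G C \<Gamma>C \<Gamma>1 \<Gamma>m \<alpha>_aff \<alpha>_conj] by blast
  have P3: "\<forall>x. induced_map G N \<alpha> (orbit G N x) = orbit G N (aff_act G \<alpha> x)"
    using induced_orbit[OF G C NC N1 Nm \<alpha>_aff P1] by blast
  have P4: "\<forall>x. proj_map G \<Gamma> (orbit G N x) = orbit G \<Gamma> x"
  proof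
    fix x
    show "proj_map G \<Gamma> (orbit G N x) = orbit G \<Gamma> x"
    proof
      show "proj_map G \<Gamma> (orbit G N x) \<subseteq> orbit G \<Gamma> x"
      proof
        fix z assume "z \<in> proj_map G \<Gamma> (orbit G N x)"
        then obtain \<gamma> n where z: "z = aff_act G \<gamma> (aff_act G n x)" "\<gamma> \<in> \<Gamma>" "n \<in> N"
          by (auto simp: proj_map_def orbit_def)
        then have "z = aff_act G (\<gamma> \<otimes>\<^bsub>Aff G\<^esub> n) x" using act_mult[OF G C, of \<gamma> n x] \<Gamma>C NC z(2,3) by (metis subsetD)
        moreover have "\<gamma> \<otimes>\<^bsub>Aff G\<^esub> n \<in> \<Gamma>" using z NG \<Gamma>m by blast
        ultimately show "z \<in> orbit G \<Gamma> x" by (auto simp: orbit_def)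
      qed
      show "orbit G \<Gamma> x \<subseteq> proj_map G \<Gamma> (orbit G N x)"
        using orbit_mem[OF G C N1, of x] by (auto simp: proj_map_def orbit_def)
    qed
  qed
  define A where "A = aff_act G \<alpha>"
  have iterN: "\<forall>x j. (induced_map G N \<alpha> ^^ j) (orbit G N x) = orbit G N ((A ^^ j) x)"
  proof (intro allI)
    fix x j show "(induced_map G N \<alpha> ^^ j) (orbit G N x) = orbit G N ((A ^^ j) x)"
      by (induction j) (simp_all add: P3 A_def)
  qed
  have iterG: "\<forall>x j. (induced_map G \<Gamma> \<alpha> ^^ j) (orbit G \<Gamma> x) = orbit G \<Gamma> ((A ^^ j) x)"
  proof (intro allI)
    fix x j show "(induced_map G \<Gamma> \<alpha> ^^ j) (orbit G \<Gamma> x) = orbit G \<Gamma> ((A ^^ j) x)"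
      by (induction j) (simp_all add: P2 A_def)
  qed
  have actpow: "aff_act G (\<alpha> [^]\<^bsub>Aff G\<^esub> j) y = (A ^^ j) y" for j y
  proof (induction j arbitrary: y)
    case 0 then show ?case using act_one[OF G C] by simp
  next
    case (Suc j)
    have "aff_act G (\<alpha> [^]\<^bsub>Aff G\<^esub> Suc j) y = aff_act G \<alpha> (aff_act G (\<alpha> [^]\<^bsub>Aff G\<^esub> j) y)"
      using act_mult[OF G C] \<alpha>_aff A.nat_pow_Suc2[OF \<alpha>_aff, of j] by (simp del: A.nat_pow_Suc nat_pow_Suc)
    then show ?case using Suc by (simp add: A_def)
  qed
  have conjpow: "\<forall>\<gamma>\<in>\<Gamma>. \<alpha> [^]\<^bsub>Aff G\<^esub> j \<otimes>\<^bsub>Aff G\<^esub> \<gamma> \<otimes>\<^bsub>Aff G\<^esub> inv\<^bsub>Aff G\<^esub> (\<alpha> [^]\<^bsub>Aff G\<^esub> j) \<in> \<Gamma>" for j :: nat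
  proof (induction j)
    case 0 then show ?case using \<Gamma>C by auto
  next
    case (Suc j)
    show ?case
    proof
      fix \<gamma> assume g: "\<gamma> \<in> \<Gamma>"
      define c where "c = \<alpha> [^]\<^bsub>Aff G\<^esub> j \<otimes>\<^bsub>Aff G\<^esub> \<gamma> \<otimes>\<^bsub>Aff G\<^esub> inv\<^bsub>Aff G\<^esub> (\<alpha> [^]\<^bsub>Aff G\<^esub> j)"
      have c: "c \<in> \<Gamma>" using Suc g by (simp add: c_def)
      have "\<alpha> [^]\<^bsub>Aff G\<^esub> Suc j \<otimes>\<^bsub>Aff G\<^esub> \<gamma> \<otimes>\<^bsub>Aff G\<^esub> inv\<^bsub>Aff G\<^esub> (\<alpha> [^]\<^bsub>Aff G\<^esub> Suc j)
          = \<alpha> \<otimes>\<^bsub>Aff G\<^esub> c \<otimes>\<^bsub>Aff G\<^esub> inv\<^bsub>Aff G\<^esub> \<alpha>"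
        using \<alpha>_aff subsetD[OF \<Gamma>C g] A.nat_pow_Suc2[OF \<alpha>_aff, of j] by (simp add: c_def A.inv_mult_group A.m_assoc del: A.nat_pow_Suc nat_pow_Suc)
      then show "\<alpha> [^]\<^bsub>Aff G\<^esub> Suc j \<otimes>\<^bsub>Aff G\<^esub> \<gamma> \<otimes>\<^bsub>Aff G\<^esub> inv\<^bsub>Aff G\<^esub> (\<alpha> [^]\<^bsub>Aff G\<^esub> Suc j) \<in> \<Gamma>"
        using \<alpha>_conj c by simp
    qed
  qed
  have key: "\<exists>m>0. \<exists>\<nu>\<in>N. (A ^^ m) x = aff_act G \<nu> x"
    if k: "k > 0" and g0: "\<gamma>0 \<in> \<Gamma>" and eq: "(A ^^ k) x = aff_act G \<gamma>0 x" for k \<gamma>0 x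
  proof -
    define \<beta> where "\<beta> = \<alpha> [^]\<^bsub>Aff G\<^esub> k"
    have \<beta>C: "\<beta> \<in> carrier (Aff G)" using \<alpha>_aff by (simp add: \<beta>_def)
    have \<beta>act: "aff_act G \<beta> y = (A ^^ k) y" for y by (simp add: \<beta>_def actpow)
    define T where "T = (\<lambda>\<gamma>. \<beta> \<otimes>\<^bsub>Aff G\<^esub> \<gamma> \<otimes>\<^bsub>Aff G\<^esub> inv\<^bsub>Aff G\<^esub> \<beta> \<otimes>\<^bsub>Aff G\<^esub> \<gamma>0)"
    have T\<Gamma>: "T \<gamma> \<in> \<Gamma>" if "\<gamma> \<in> \<Gamma>" for \<gamma>
      using conjpow[of k] that g0 \<Gamma>m by (simp add: T_def \<beta>_def)
    define g where "g = (\<lambda>j. (T ^^ j) \<one>\<^bsub>Aff G\<^esub>)"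
    have g\<Gamma>: "g j \<in> \<Gamma>" for j by (induction j) (simp_all add: g_def \<Gamma>1 T\<Gamma>)
    have gact: "((A ^^ k) ^^ j) x = aff_act G (g j) x" for j
    proof (induction j)
      case 0 then show ?case using act_one[OF G C] by (simp add: g_def)
    next
      case (Suc j)
      have gc: "g j \<in> carrier (Aff G)" using g\<Gamma> \<Gamma>C by blast
      have g0c: "\<gamma>0 \<in> carrier (Aff G)" using g0 \<Gamma>C by blast
      define c where "c = \<beta> \<otimes>\<^bsub>Aff G\<^esub> g j \<otimes>\<^bsub>Aff G\<^esub> inv\<^bsub>Aff G\<^esub> \<beta>"
      have cc: "c \<in> carrier (Aff G)" using gc \<beta>C by (simp add: c_def)
      have cb: "c \<otimes>\<^bsub>Aff G\<^esub> \<beta> = \<beta> \<otimes>\<^bsub>Aff G\<^esub> g j" using gc \<beta>C by (simp add: c_def A.m_assoc)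
      have "((A ^^ k) ^^ Suc j) x = aff_act G \<beta> (aff_act G (g j) x)" using Suc by (simp add: \<beta>act)
      also have "\<dots> = aff_act G (\<beta> \<otimes>\<^bsub>Aff G\<^esub> g j) x" using act_mult[OF G C \<beta>C gc] by simp
      also have "\<dots> = aff_act G c (aff_act G \<beta> x)" using act_mult[OF G C cc \<beta>C] cb by simp
      also have "\<dots> = aff_act G c (aff_act G \<gamma>0 x)" using eq by (simp add: \<beta>act)
      also have "\<dots> = aff_act G (c \<otimes>\<^bsub>Aff G\<^esub> \<gamma>0) x" using act_mult[OF G C cc g0c] by simp
      also have "c \<otimes>\<^bsub>Aff G\<^esub> \<gamma>0 = g (Suc j)" by (simp add: c_def g_def T_def)
      finally show ?case .
    qed
    define L where "L = (\<lambda>l. snd \<beta> \<circ> l \<circ> snd (inv\<^bsub>Aff G\<^esub> \<beta>) \<circ> snd \<gamma>0)"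
    have snT: "snd (T \<gamma>) = L (snd \<gamma>)" for \<gamma> by (simp add: T_def L_def snd_mult)
    have gsnd: "snd (g j) = (L ^^ j) id" for j
      by (induction j) (simp_all add: g_def snd_one snT)
    define H where "H = snd ` \<Gamma>"
    have "H \<subseteq> F" using \<Gamma>_in by (auto simp: H_def)
    then have finH: "finite H" using F_fin finite_subset by blast
    have LH: "L ` H \<subseteq> H"
    proof
      fix l assume "l \<in> L ` H"
      then obtain \<gamma> where g: "\<gamma> \<in> \<Gamma>" "l = L (snd \<gamma>)" by (auto simp: H_def)
      then have "l = snd (T \<gamma>)" by (simp add: snT)
      then show "l \<in> H" using T\<Gamma>[OF g(1)] by (simp add: H_def)
    qed
    have inv\<beta>: "snd (inv\<^bsub>Aff G\<^esub> \<beta>) (snd \<beta> w) = w" for w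
    proof -
      have "snd (inv\<^bsub>Aff G\<^esub> \<beta> \<otimes>\<^bsub>Aff G\<^esub> \<beta>) = id" using \<beta>C by (simp add: snd_one)
      then show ?thesis by (metis comp_apply id_apply snd_mult)
    qed
    have inv\<beta>2: "snd \<beta> (snd (inv\<^bsub>Aff G\<^esub> \<beta>) w) = w" for w
    proof -
      have "snd (\<beta> \<otimes>\<^bsub>Aff G\<^esub> inv\<^bsub>Aff G\<^esub> \<beta>) = id" using \<beta>C by (simp add: snd_one)
      then show ?thesis by (metis comp_apply id_apply snd_mult)
    qed
    have inv0: "snd \<gamma>0 (snd (inv\<^bsub>Aff G\<^esub> \<gamma>0) w) = w" for w
    proof -
      have "snd (\<gamma>0 \<otimes>\<^bsub>Aff G\<^esub> inv\<^bsub>Aff G\<^esub> \<gamma>0) = id" using subsetD[OF \<Gamma>C g0] by (simp add: snd_one)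
      then show ?thesis by (metis comp_apply id_apply snd_mult)
    qed
    have injL: "inj_on L H"
    proof (rule inj_onI)
      fix l l' assume "l \<in> H" "l' \<in> H" and LL: "L l = L l'"
      show "l = l'"
      proof
        fix z
        define w where "w = snd (inv\<^bsub>Aff G\<^esub> \<gamma>0) (snd \<beta> z)"
        have "L l w = L l' w" using LL by simp
        then have "snd \<beta> (l z) = snd \<beta> (l' z)" by (simp add: L_def w_def inv0 inv\<beta>)
        then show "l z = l' z" by (metis inv\<beta>)
      qed
    qed
    have idH: "id \<in> H" using \<Gamma>1 snd_one unfolding H_def by (metis image_eqI)
    obtain m where m: "m > 0" "(L ^^ m) id = id" using inj_periodic[OF finH LH injL idH] by blast
    have "g m \<in> N" using g\<Gamma> gsnd m by (simp add: N_def transl_part_def)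
    moreover have "(A ^^ (k * m)) x = aff_act G (g m) x" using gact by (simp add: funpow_mult)
    moreover have "k * m > 0" using k m by simp
    ultimately show ?thesis by blast
  qed
  have PerEq: "(\<exists>j>0. orbit G \<Gamma> ((A ^^ j) y) = orbit G \<Gamma> y) \<longleftrightarrow> (\<exists>j>0. orbit G N ((A ^^ j) y) = orbit G N y)" for y
  proof
    assume "\<exists>j>0. orbit G \<Gamma> ((A ^^ j) y) = orbit G \<Gamma> y"
    then obtain j where j: "j > 0" "orbit G \<Gamma> ((A ^^ j) y) = orbit G \<Gamma> y" by blast
    then have "(A ^^ j) y \<in> orbit G \<Gamma> y" using orbit_mem[OF G C \<Gamma>1, of "(A ^^ j) y"] by simp
    then obtain \<gamma>0 where "\<gamma>0 \<in> \<Gamma>" "(A ^^ j) y = aff_act G \<gamma>0 y" by (auto simp: orbit_def)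
    then obtain m \<nu> where m: "m > 0" "\<nu> \<in> N" "(A ^^ m) y = aff_act G \<nu> y" using key j by blast
    then have "orbit G N ((A ^^ m) y) = orbit G N y" using orbit_shift[OF G C NC Nm Ni] by simp
    then show "\<exists>j>0. orbit G N ((A ^^ j) y) = orbit G N y" using m by blast
  next
    assume "\<exists>j>0. orbit G N ((A ^^ j) y) = orbit G N y"
    then show "\<exists>j>0. orbit G \<Gamma> ((A ^^ j) y) = orbit G \<Gamma> y" using P4 by metis
  qed
  have P5: "\<forall>S\<in>orbit_space G N. proj_map G \<Gamma> (induced_map G N \<alpha> S) = induced_map G \<Gamma> \<alpha> (proj_map G \<Gamma> S)"
    using P2 P3 P4 by (auto simp: orbit_space_def)
  have P6: "{S \<in> orbit_space G N. proj_map G \<Gamma> S \<in> ePer_on (orbit_space G \<Gamma>) (induced_map G \<Gamma> \<alpha>)}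
         = ePer_on (orbit_space G N) (induced_map G N \<alpha>)"
    unfolding orbit_space_def
  proof (rule set_eq_helper)
    show "ePer_on (range (orbit G N)) (induced_map G N \<alpha>) \<subseteq> range (orbit G N)" by (auto simp: ePer_on_def)
    fix x
    show "proj_map G \<Gamma> (orbit G N x) \<in> ePer_on (range (orbit G \<Gamma>)) (induced_map G \<Gamma> \<alpha>)
        \<longleftrightarrow> orbit G N x \<in> ePer_on (range (orbit G N)) (induced_map G N \<alpha>)"
      using P4 eper_char[OF iterG] eper_char[OF iterN] PerEq by simp
  qed
  have P7: "{S \<in> orbit_space G N. proj_map G \<Gamma> S \<in> Per_on (orbit_space G \<Gamma>) (induced_map G \<Gamma> \<alpha>)}
         = Per_on (orbit_space G N) (induced_map G N \<alpha>)"
    unfolding orbit_space_def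
  proof (rule set_eq_helper)
    show "Per_on (range (orbit G N)) (induced_map G N \<alpha>) \<subseteq> range (orbit G N)" by (auto simp: Per_on_def)
    fix x
    show "proj_map G \<Gamma> (orbit G N x) \<in> Per_on (range (orbit G \<Gamma>)) (induced_map G \<Gamma> \<alpha>)
        \<longleftrightarrow> orbit G N x \<in> Per_on (range (orbit G N)) (induced_map G N \<alpha>)"
      using P4 per_char[OF iterG] per_char[OF iterN] PerEq by simp
  qed
  show ?thesis using P1 P2 P3 P4 P5 P6 P7 unfolding N_def by blast
qed

end
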